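(* Let $k$ be odd and let $G$ be a $k$-uniform $s$-cycle with $1\le s<\frac{k}{2}$. Then $\lambda(\mathcal{L})=\Delta=2$, where $\Delta$ is the maximum degree of $G$. If $s$ is even, then the only Laplacian H-eigenvalue $\lambda$ of $G$ with $\lambda>1$ is $2$.
   Context: A $k$-uniform $s$-cycle with $m$ edges has vertex set $\mathbb{Z}_n$, $n=m(k-s)$ (vertex $n+i$ identified with $i$), and edges $e_j=\{j(k-s)+1,\ldots,j(k-s)+k\}$, $j=0,\ldots,m-1$; it is assumed that $n\ge 2k-s$. The degree $d_i$ of a vertex is the number of edges containing it. A Laplacian H-eigenvalue of $G$ is a real $\lambda$ for which there exists $\mathbf{x}\in\mathbb{R}^n\setminus\{0\}$ with $\lambda x_i^{k-1}=d_ix_i^{k-1}-\sum_{e\ni i}\prod_{j\in e\setminus\{i\}}x_j$ for all $i$ (equivalently, an H-eigenvalue of the Laplacian tensor $\mathcal{L}=\mathcal{D}-\mathcal{A}$, with $\mathcal{A}$ the adjacency tensor having entries $1/(k-1)!$ on edges and $\mathcal{D}$ the diagonal degree tensor); $\lambda(\mathcal{L})$ is the largest Laplacian H-eigenvalue. *)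

theory Defs
  imports Complex_Main
begin

text \<open>A k-uniform s-cycle with m edges. Vertices are 0..<n, n = m(k-s), representing Z_n
(vertex n+i identified with i via mod n).\<close>

definition scyc_n :: "nat \<Rightarrow> nat \<Rightarrow> nat \<Rightarrow> nat" where
  "scyc_n k s m = m * (k - s)"

definition scyc_edge :: "nat \<Rightarrow> nat \<Rightarrow> nat \<Rightarrow> nat \<Rightarrow> nat set" where
  "scyc_edge k s m j = {(j * (k - s) + t) mod scyc_n k s m | t. 1 \<le> t \<and> t \<le> k}"

definition scyc_deg :: "nat \<Rightarrow> nat \<Rightarrow> nat \<Rightarrow> nat \<Rightarrow> nat" where
  "scyc_deg k s m i = card {j. j < m \<and> i \<in> scyc_edge k s m j}"

definition scyc_maxdeg :: "nat \<Rightarrow> nat \<Rightarrow> nat \<Rightarrow> nat" where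
  "scyc_maxdeg k s m = Max (scyc_deg k s m ` {0..<scyc_n k s m})"

definition scyc_lap_H_eig :: "nat \<Rightarrow> nat \<Rightarrow> nat \<Rightarrow> real \<Rightarrow> bool" where
  "scyc_lap_H_eig k s m lam \<longleftrightarrow>
     (\<exists>x :: nat \<Rightarrow> real.
        (\<exists>i < scyc_n k s m. x i \<noteq> 0) \<and>
        (\<forall>i < scyc_n k s m.
           lam * x i ^ (k - 1) =
             real (scyc_deg k s m i) * x i ^ (k - 1)
             - (\<Sum>j \<in> {j. j < m \<and> i \<in> scyc_edge k s m j}.
                  \<Prod>v \<in> scyc_edge k s m j - {i}. x v)))"

end

theory Submission imports Defs begin

lemma odd_pow_inj: "odd (n::nat) \<Longrightarrow> (a::real) ^ n = b ^ n \<Longrightarrow> a = b"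
  by (metis odd_real_root_power_cancel)

lemma mod_inj_1n: "1 \<le> (a::nat) \<Longrightarrow> a \<le> n \<Longrightarrow> 1 \<le> b \<Longrightarrow> b \<le> n \<Longrightarrow> a mod n = b mod n \<Longrightarrow> a = b"
  by (metis le_eq_less_or_eq mod_less mod_self not_one_le_zero)

lemma divmod_inj: "r < (p::nat) \<Longrightarrow> r' < p \<Longrightarrow> q * p + r = q' * p + r' \<Longrightarrow> q = q' \<and> r = r'"
  by (metis add.commute div_mult_self1 div_less mod_mult_self1 mod_less not_less0 add_0)

locale scyc =
  fixes k s m p n :: nat
  assumes oddk: "odd k" and s1: "1 \<le> s" and s2: "2 * s < k" and m3: "3 \<le> m"
    and kdef: "k = p + s" and ndef: "n = m * p"
begin

definition V :: "nat \<Rightarrow> nat \<Rightarrow> nat" where "V q t = (q * p + t) mod n"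
abbreviation "E j \<equiv> scyc_edge k s m j"

lemma ks: "k - s = p" using kdef by simp
lemma nn: "scyc_n k s m = n" by (simp add: scyc_n_def ks ndef)
lemma p2: "s < p" "2 \<le> p" using s1 s2 kdef by auto
lemma npos: "0 < n" using p2 m3 ndef by simp

lemma V_lt: "V q t < n" using npos by (simp add: V_def)

lemma V_inj: assumes "q < m" "q' < m" "1 \<le> t" "t \<le> p" "1 \<le> t'" "t' \<le> p" "V q t = V q' t'"
  shows "q = q' \<and> t = t'"
proof -
  have "q * p + t \<le> (q+1)*p" "(q+1)*p \<le> m*p" using assms(1,4) by (simp, intro mult_right_mono, auto)
  hence b1: "q * p + t \<le> n" using ndef by linarith
  have "q' * p + t' \<le> (q'+1)*p" "(q'+1)*p \<le> m*p" using assms(2,6) by (simp, intro mult_right_mono, auto)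
  hence b2: "q' * p + t' \<le> n" using ndef by linarith
  have e: "q * p + t = q' * p + t'"
    using mod_inj_1n[OF _ b1 _ b2] assms(3,5,7) unfolding V_def by simp
  define r where "r = t - 1"
  define r' where "r' = t' - 1"
  have "t = r + 1" "t' = r' + 1" "r < p" "r' < p" using assms unfolding r_def r'_def by auto
  hence "q * p + r = q' * p + r'" using e by simp
  with divmod_inj[OF \<open>r < p\<close> \<open>r' < p\<close>] have "q = q' \<and> r = r'" by blast
  thus ?thesis using \<open>t = r + 1\<close> \<open>t' = r' + 1\<close> by simp
qed

lemma V_surj: assumes "v < n" shows "\<exists>q<m. \<exists>t. 1 \<le> t \<and> t \<le> p \<and> v = V q t"
proof (cases "v = 0")
  case True
  have "m = Suc (m - 1)" using m3 by simp
  hence "(m - 1) * p + p = m * p" by (metis add.commute mult_Suc)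
  hence "V (m - 1) p = (m * p) mod n" unfolding V_def by simp
  hence "V (m - 1) p = 0" using ndef by simp
  thus ?thesis using True m3 p2 by (intro exI[of _ "m-1"]) (auto intro!: exI[of _ p])
next
  case False
  define q where "q = (v - 1) div p"
  define r where "r = (v - 1) mod p"
  have "v - 1 = q * p + r" unfolding q_def r_def by simp
  hence v: "v = q * p + (r + 1)" using False by simp
  have "r < p" unfolding r_def using p2 by simp
  have "q < m" proof (rule ccontr)
    assume "\<not> q < m" hence "m * p \<le> q * p" by simp
    thus False using v assms ndef by linarith
  qed
  moreover have "v = V q (r+1)" using v assms unfolding V_def by simp
  ultimately show ?thesis using \<open>r < p\<close> by (intro exI[of _ q]) (auto intro!: exI[of _ "r+1"])
qed

lemma V_wrap: "V ((j + 1) mod m) t = (j * p + p + t) mod n"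
proof -
  have "V ((j + 1) mod m) t = (((j+1) mod m) * p + t) mod n" by (simp add: V_def)
  also have "((j+1) mod m) * p = ((j+1) * p) mod n" unfolding ndef by (rule mod_mult_mult2[symmetric])
  also have "((j+1)*p mod n + t) mod n = ((j+1)*p + t) mod n" by (simp add: mod_add_left_eq)
  finally show ?thesis by (simp add: algebra_simps)
qed

lemma edge_eq: "E j = V j ` {1..p} \<union> V ((j + 1) mod m) ` {1..s}"
proof
  show "E j \<subseteq> V j ` {1..p} \<union> V ((j + 1) mod m) ` {1..s}"
  proof
    fix v assume "v \<in> E j"
    then obtain t where t: "1 \<le> t" "t \<le> k" "v = (j * p + t) mod n" unfolding scyc_edge_def ks nn by auto
    show "v \<in> V j ` {1..p} \<union> V ((j + 1) mod m) ` {1..s}"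
    proof (cases "t \<le> p")
      case True thus ?thesis using t by (auto simp: V_def)
    next
      case False
      hence "j*p + t = j*p + p + (t-p)" by simp
      hence "v = V ((j + 1) mod m) (t - p)" using t by (simp only: V_wrap)
      moreover have "t - p \<in> {1..s}" using False t kdef by auto
      ultimately show ?thesis by blast
    qed
  qed
next
  show "V j ` {1..p} \<union> V ((j + 1) mod m) ` {1..s} \<subseteq> E j"
  proof
    fix v assume "v \<in> V j ` {1..p} \<union> V ((j + 1) mod m) ` {1..s}"
    then consider t where "t \<in> {1..p}" "v = V j t" | t where "t \<in> {1..s}" "v = V ((j + 1) mod m) t" by auto
    thus "v \<in> E j"
    proof cases
      case 1 thus ?thesis using kdef unfolding scyc_edge_def V_def ks nn by auto
    next
      case 2
      have "v = V ((j + 1) mod m) t" using 2 by simp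
      also have "\<dots> = (j * p + (p + t)) mod n" by (simp only: V_wrap add.assoc)
      finally have "v = (j * p + (p + t)) mod n" "1 \<le> p + t" "p + t \<le> k" using kdef 2 by auto
      thus ?thesis unfolding scyc_edge_def ks nn by blast
    qed
  qed
qed

lemma E_fin: "finite (E j)" by (simp add: edge_eq)

lemma mem: assumes "q < m" "j < m" "1 \<le> t" "t \<le> p"
  shows "V q t \<in> E j \<longleftrightarrow> j = q \<or> (t \<le> s \<and> q = (j+1) mod m)"
proof -
  have jm: "(j+1) mod m < m" using m3 by simp
  have "V q t \<in> V j ` {1..p} \<longleftrightarrow> j = q"
  proof
    assume "V q t \<in> V j ` {1..p}"
    then obtain t' where "t' \<in> {1..p}" "V q t = V j t'" by auto
    thus "j = q" using V_inj[OF assms(1,2,3,4), of t'] by auto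
  qed (use assms in auto)
  moreover have "V q t \<in> V ((j+1) mod m) ` {1..s} \<longleftrightarrow> (t \<le> s \<and> q = (j+1) mod m)"
  proof
    assume "V q t \<in> V ((j+1) mod m) ` {1..s}"
    then obtain t' where "t' \<in> {1..s}" "V q t = V ((j+1) mod m) t'" by auto
    thus "t \<le> s \<and> q = (j+1) mod m" using V_inj[OF assms(1) jm assms(3,4), of t'] p2 by auto
  qed (use assms in auto)
  ultimately show ?thesis unfolding edge_eq by blast
qed

lemma predm: assumes "q \<noteq> 0" "q < m" shows "(q+m-1) mod m = q - 1"
proof -
  have e: "q+m-1 = (q-1)+m" using assms by simp
  have "(q+m-1) mod m = ((q-1)+m) mod m" by (simp only: e)
  also have "\<dots> = (q-1) mod m" by (rule mod_add_self2)
  also have "\<dots> = q - 1" using assms by simp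
  finally show ?thesis .
qed

lemma pred: assumes "j < m" "q < m" shows "q = (j+1) mod m \<longleftrightarrow> j = (q+m-1) mod m"
proof (cases "j + 1 = m")
  case True
  hence jm: "j = m - 1" "(j+1) mod m = 0" by auto
  show ?thesis
  proof (cases "q = 0")
    case True
    have "m - 1 < m" using m3 by simp
    hence "(m - 1) mod m = m - 1" by (rule mod_less)
    thus ?thesis using jm True by simp
  next
    case False
    hence "(q+m-1) mod m = q - 1" using predm[OF False assms(2)] by blast
    thus ?thesis using jm False assms by linarith
  qed
next
  case False
  hence a: "(j+1) mod m = j + 1" using assms by simp
  show ?thesis
  proof (cases "q = 0")
    case qT: True
    have "m - 1 < m" using m3 by simp
    hence "(m - 1) mod m = m - 1" by (rule mod_less)
    hence "(q + m - 1) mod m = m - 1" using qT by simp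
    thus ?thesis using a qT False assms by linarith
  next
    case qF: False
    hence "(q+m-1) mod m = q - 1" using predm[OF qF assms(2)] by blast
    thus ?thesis using a qF False assms by linarith
  qed
qed

lemma qne: "q < m \<Longrightarrow> (q+m-1) mod m \<noteq> q"
  using predm[of q] m3 by (cases "q = 0") auto

lemma D: assumes "q < m" "1 \<le> t" "t \<le> p"
  shows "{j. j < m \<and> V q t \<in> E j} = (if t \<le> s then {q, (q+m-1) mod m} else {q})"
proof (rule set_eqI)
  fix j
  have qm: "(q+m-1) mod m < m" using m3 by simp
  show "j \<in> {j. j < m \<and> V q t \<in> E j} \<longleftrightarrow> j \<in> (if t \<le> s then {q, (q+m-1) mod m} else {q})"
  proof (cases "j < m")
    case True
    have "V q t \<in> E j \<longleftrightarrow> j = q \<or> (t \<le> s \<and> q = (j+1) mod m)" by (rule mem[OF assms(1) True assms(2,3)])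
    moreover have "q = (j+1) mod m \<longleftrightarrow> j = (q+m-1) mod m" by (rule pred[OF True assms(1)])
    ultimately show ?thesis using True by simp
  next
    case False thus ?thesis using qm assms(1) by auto
  qed
qed

lemma deg: assumes "q < m" "1 \<le> t" "t \<le> p"
  shows "scyc_deg k s m (V q t) = (if t \<le> s then 2 else 1)"
  unfolding scyc_deg_def D[OF assms] using qne[OF assms(1)] by auto

lemma maxdeg: "scyc_maxdeg k s m = 2"
  unfolding scyc_maxdeg_def nn
proof (rule Max_eqI)
  fix y assume "y \<in> scyc_deg k s m ` {0..<n}"
  then obtain v where "v < n" "y = scyc_deg k s m v" by auto
  thus "y \<le> 2" using V_surj deg by fastforce
next
  have "scyc_deg k s m (V 0 1) = 2" using deg[of 0 1] m3 p2 s1 by simp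
  moreover have "V 0 1 < n" by (rule V_lt)
  ultimately show "2 \<in> scyc_deg k s m ` {0..<n}" by force
qed auto


lemma succ_bij: "bij_betw (\<lambda>j. (j+1) mod m) {..<m} {..<m}"
proof -
  have m0: "0 < m" using m3 by simp
  have bk: "j < m \<Longrightarrow> ((j+1) mod m + m - 1) mod m = j" for j
    using pred[of j "(j+1) mod m"] m0 by simp
  have "inj_on (\<lambda>j. (j+1) mod m) {..<m}"
    by (rule inj_onI) (metis bk lessThan_iff)
  moreover have "(\<lambda>j. (j+1) mod m) ` {..<m} = {..<m}"
  proof
    show "(\<lambda>j. (j+1) mod m) ` {..<m} \<subseteq> {..<m}" using m0 by auto
    show "{..<m} \<subseteq> (\<lambda>j. (j+1) mod m) ` {..<m}"
    proof
      fix q assume q: "q \<in> {..<m}"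
      have qm: "(q+m-1) mod m < m" using m0 by simp
      have "q = ((q+m-1) mod m + 1) mod m" using pred[OF qm, of q] q by simp
      thus "q \<in> (\<lambda>j. (j+1) mod m) ` {..<m}" using qm by blast
    qed
  qed
  ultimately show ?thesis unfolding bij_betw_def by blast
qed

lemma succ_back: "j < m \<Longrightarrow> ((j+1) mod m + m - 1) mod m = j"
  using pred[of j "(j+1) mod m"] m3 by simp

lemma abstr:
  fixes a b P :: "nat \<Rightarrow> real" and lam :: real and t :: nat
  assumes kt: "k = t + 2*s" and tod: "odd t"
    and PP: "\<And>j. j < m \<Longrightarrow> P j = b j ^ s * a j ^ t * b ((j+1) mod m) ^ s"
    and AA: "\<And>j. j < m \<Longrightarrow> (lam - 1) * a j ^ k = - P j"
    and BB: "\<And>j. j < m \<Longrightarrow> (lam - 2) * b j ^ k = - (P j + P ((j+m-1) mod m))"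
    and l1: "lam > 1" and l2: "lam \<noteq> 2" and l3: "even s \<or> lam > 2"
    and jm: "j < m"
  shows "a j = 0 \<and> b j = 0"
proof -
  have step1: "(b j * b ((j+1) mod m)) ^ s < 0" if j: "j < m" and nz: "P j \<noteq> 0" for j
  proof -
    let ?B = "(b j * b ((j+1) mod m)) ^ s"
    have Pj: "P j = a j ^ t * ?B" using PP[OF j] by (simp add: power_mult_distrib)
    have an: "a j \<noteq> 0" using nz Pj tod by auto
    have "a j ^ k = a j ^ t * a j ^ (2*s)" using kt by (simp add: power_add)
    hence "a j ^ t * ((lam - 1) * a j ^ (2*s) + ?B) = 0" using AA[OF j] Pj by (simp add: algebra_simps)
    hence e: "?B = - ((lam - 1) * a j ^ (2*s))" using an by simp
    have "a j ^ (2*s) > 0" using an by (simp add: power_mult)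
    hence "(lam - 1) * a j ^ (2*s) > 0" using l1 by simp
    thus ?thesis using e by simp
  qed
  have allP: "\<forall>j<m. P j = 0"
  proof (cases "even s")
    case True
    { fix j assume "j < m" "P j \<noteq> 0"
      hence "(b j * b ((j+1) mod m)) ^ s < 0" by (rule step1)
      moreover have "(b j * b ((j+1) mod m)) ^ s \<ge> 0" using True by (rule zero_le_even_power)
      ultimately have False by linarith }
    thus ?thesis by blast
  next
    case False
    hence lg: "lam > 2" using l3 by simp
    have ko: "odd k" using kt tod by simp
    have sg: "\<And>y::real. y ^ k * sgn y = \<bar>y\<bar> ^ k"
    proof -
      fix y :: real
      show "y ^ k * sgn y = \<bar>y\<bar> ^ k"
      proof (cases "y < 0")
        case True
        have "y = - \<bar>y\<bar>" using True by simp
        hence "y ^ k = - (\<bar>y\<bar> ^ k)" using power_minus_odd[OF ko, of "\<bar>y\<bar>"] by simp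
        thus ?thesis using True by simp
      next
        case False thus ?thesis by (cases "y = 0") (use ko in \<open>auto simp: odd_pos\<close>)
      qed
    qed
    have term0: "P j * (sgn (b j) + sgn (b ((j+1) mod m))) = 0" if "j < m" for j
    proof (cases "P j = 0")
      case False
      hence "(b j * b ((j+1) mod m)) ^ s < 0" using step1 that by blast
      hence "b j * b ((j+1) mod m) < 0"
        by (metis not_le zero_le_power)
      hence "sgn (b j) + sgn (b ((j+1) mod m)) = 0"
        by (auto simp: mult_less_0_iff)
      thus ?thesis by simp
    qed simp
    have "(\<Sum>j<m. P ((j+m-1) mod m) * sgn (b j)) = (\<Sum>j<m. P (((j+1) mod m + m - 1) mod m) * sgn (b ((j+1) mod m)))"
      using sum.reindex_bij_betw[OF succ_bij, of "\<lambda>j. P ((j+m-1) mod m) * sgn (b j)"] by simp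
    also have "\<dots> = (\<Sum>j<m. P j * sgn (b ((j+1) mod m)))"
    proof (rule sum.cong)
      fix j assume "j \<in> {..<m}"
      hence "((j+1) mod m + m - 1) mod m = j" using succ_back by simp
      thus "P (((j+1) mod m + m - 1) mod m) * sgn (b ((j+1) mod m)) = P j * sgn (b ((j+1) mod m))" by (simp only:)
    qed simp
    finally have re: "(\<Sum>j<m. P ((j+m-1) mod m) * sgn (b j)) = (\<Sum>j<m. P j * sgn (b ((j+1) mod m)))" .
    have "(\<Sum>j<m. (lam - 2) * \<bar>b j\<bar> ^ k) = (\<Sum>j<m. ((lam - 2) * b j ^ k) * sgn (b j))"
      by (rule sum.cong) (auto simp: sg[symmetric])
    also have "\<dots> = (\<Sum>j<m. - (P j * sgn (b j)) - P ((j+m-1) mod m) * sgn (b j))"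
    proof (rule sum.cong)
      fix j assume "j \<in> {..<m}"
      hence eq: "(lam - 2) * b j ^ k = - (P j + P ((j+m-1) mod m))" using BB by simp
      have e2: "((lam - 2) * b j ^ k) * sgn (b j) = (- (P j + P ((j+m-1) mod m))) * sgn (b j)" by (simp only: eq)
      show "((lam - 2) * b j ^ k) * sgn (b j) = - (P j * sgn (b j)) - P ((j+m-1) mod m) * sgn (b j)"
        unfolding e2 by (simp add: algebra_simps)
    qed simp
    also have "\<dots> = - (\<Sum>j<m. P j * sgn (b j)) - (\<Sum>j<m. P ((j+m-1) mod m) * sgn (b j))"
      by (simp add: sum_subtractf sum_negf)
    also have "\<dots> = - (\<Sum>j<m. P j * sgn (b j)) - (\<Sum>j<m. P j * sgn (b ((j+1) mod m)))"
      by (simp only: re)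
    also have "\<dots> = - (\<Sum>j<m. P j * (sgn (b j) + sgn (b ((j+1) mod m))))"
      by (simp only: distrib_left sum.distrib)
    also have "\<dots> = 0"
    proof -
      have "(\<Sum>j<m. P j * (sgn (b j) + sgn (b ((j+1) mod m)))) = 0"
        by (rule sum.neutral) (use term0 in blast)
      thus ?thesis by simp
    qed
    finally have s0: "(\<Sum>j<m. (lam - 2) * \<bar>b j\<bar> ^ k) = 0" .
    have "\<forall>j\<in>{..<m}. (lam - 2) * \<bar>b j\<bar> ^ k = 0"
      using sum_nonneg_eq_0_iff[of "{..<m}" "\<lambda>j. (lam - 2) * \<bar>b j\<bar> ^ k"] s0 lg by auto
    hence "\<forall>j<m. b j = 0" using lg by auto
    thus ?thesis using PP s1 by (auto simp: power_0_left)
  qed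
  have "(lam - 1) * a j ^ k = 0" using AA[OF jm] allP jm by simp
  hence "a j = 0" using l1 by simp
  moreover have "(lam - 2) * b j ^ k = 0" using BB[OF jm] allP jm m3 by simp
  hence "b j = 0" using l2 by simp
  ultimately show ?thesis by simp
qed


lemma succ_ne: "j < m \<Longrightarrow> (j+1) mod m \<noteq> j"
  using qne[of "(j+1) mod m"] succ_back[of j] m3 by auto

lemma three: assumes "j < m" shows "\<exists>w\<in>E j. w \<noteq> a \<and> w \<noteq> c"
proof -
  have jm: "(j+1) mod m < m" using m3 by simp
  have in1: "V j 1 \<in> E j" "V j 2 \<in> E j" "V ((j+1) mod m) 1 \<in> E j"
    unfolding edge_eq using p2 s1 by auto
  have d12: "V j 1 \<noteq> V j 2" using V_inj[OF assms assms, of 1 2] p2 by auto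
  have d13: "V j 1 \<noteq> V ((j+1) mod m) 1" using V_inj[OF assms jm, of 1 1] p2 succ_ne[OF assms] by auto
  have d23: "V j 2 \<noteq> V ((j+1) mod m) 1" using V_inj[OF assms jm, of 2 1] p2 succ_ne[OF assms] by auto
  show ?thesis using in1 d12 d13 d23 by metis
qed

lemma eig2: "scyc_lap_H_eig k s m 2"
proof -
  define x :: "nat \<Rightarrow> real" where "x = (\<lambda>i. if i = V 0 1 then 1 else 0)"
  have A: "\<exists>i<n. x i \<noteq> 0" using V_lt[of 0 1] unfolding x_def by auto
  have pz: "(\<Prod>v\<in>E j - {i}. x v) = 0" if jm: "j < m" for i j
  proof -
    obtain w where w: "w \<in> E j" "w \<noteq> i" "w \<noteq> V 0 1" using three[OF jm] by blast
    show ?thesis by (rule prod_zero) (use w E_fin in \<open>auto simp: x_def\<close>)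
  qed
  have sz: "(\<Sum>j \<in> {j. j < m \<and> i \<in> E j}. \<Prod>v \<in> E j - {i}. x v) = 0" for i
    by (rule sum.neutral) (use pz in auto)
  have k1: "k - 1 \<noteq> 0" using p2 kdef by simp
  have B: "2 * x i ^ (k - 1) = real (scyc_deg k s m i) * x i ^ (k - 1) - (\<Sum>j \<in> {j. j < m \<and> i \<in> E j}. \<Prod>v \<in> E j - {i}. x v)" for i
  proof (cases "i = V 0 1")
    case True
    have "scyc_deg k s m (V 0 1) = 2" using deg[of 0 1] m3 p2 s1 by simp
    thus ?thesis using True sz[of i] unfolding x_def by simp
  next
    case False
    thus ?thesis using sz[of i] k1 unfolding x_def by simp
  qed
  show ?thesis unfolding scyc_lap_H_eig_def nn using A B by blast
qed


lemma noeig: assumes ev: "scyc_lap_H_eig k s m lam" and l1: "lam > 1" and l2: "lam \<noteq> 2"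
  and l3: "even s \<or> lam > 2"
  shows False
proof -
  obtain x where nz: "\<exists>i<n. x i \<noteq> 0" and eq: "\<forall>i<n. lam * x i ^ (k - 1) =
        real (scyc_deg k s m i) * x i ^ (k - 1) - (\<Sum>j \<in> {j. j < m \<and> i \<in> E j}. \<Prod>v \<in> E j - {i}. x v)"
    using ev unfolding scyc_lap_H_eig_def nn by blast
  define P where "P j = (\<Prod>v\<in>E j. x v)" for j
  have k1: "k = Suc (k - 1)" using kdef p2 by simp
  have key: "lam * x i ^ k = real (scyc_deg k s m i) * x i ^ k - (\<Sum>j\<in>{j. j < m \<and> i \<in> E j}. P j)"
    if i: "i < n" for i
  proof -
    have "x i * (\<Sum>j \<in> {j. j < m \<and> i \<in> E j}. \<Prod>v \<in> E j - {i}. x v)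
          = (\<Sum>j \<in> {j. j < m \<and> i \<in> E j}. x i * (\<Prod>v \<in> E j - {i}. x v))"
      by (simp add: sum_distrib_left)
    also have "\<dots> = (\<Sum>j\<in>{j. j < m \<and> i \<in> E j}. P j)"
      by (rule sum.cong) (auto simp: P_def prod.remove[OF E_fin])
    finally have e1: "x i * (\<Sum>j \<in> {j. j < m \<and> i \<in> E j}. \<Prod>v \<in> E j - {i}. x v) = (\<Sum>j\<in>{j. j < m \<and> i \<in> E j}. P j)" .
    have "x i * (lam * x i ^ (k - 1)) = x i * (real (scyc_deg k s m i) * x i ^ (k - 1) - (\<Sum>j \<in> {j. j < m \<and> i \<in> E j}. \<Prod>v \<in> E j - {i}. x v))"
      using eq i by simp
    hence "lam * (x i * x i ^ (k - 1)) = real (scyc_deg k s m i) * (x i * x i ^ (k - 1)) - x i * (\<Sum>j \<in> {j. j < m \<and> i \<in> E j}. \<Prod>v \<in> E j - {i}. x v)"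
      by (simp add: algebra_simps)
    moreover have "x i * x i ^ (k - 1) = x i ^ k" by (subst (2) k1) simp
    ultimately show ?thesis using e1 by simp
  qed
  have mid: "(lam - 1) * x (V q t) ^ k = - P q" if "q < m" "s < t" "t \<le> p" for q t
  proof -
    have "1 \<le> t" using that s1 by simp
    note kk = key[OF V_lt[of q t]]
    thus ?thesis unfolding D[OF that(1) \<open>1 \<le> t\<close> that(3)] deg[OF that(1) \<open>1 \<le> t\<close> that(3)]
      using that by (simp add: algebra_simps)
  qed
  have blk: "(lam - 2) * x (V q t) ^ k = - (P q + P ((q+m-1) mod m))" if "q < m" "1 \<le> t" "t \<le> s" for q t
  proof -
    have "t \<le> p" using that p2 by simp
    note kk = key[OF V_lt[of q t]]
    have ne: "(q+m-1) mod m \<noteq> q" using qne that by blast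
    thus ?thesis using kk unfolding D[OF that(1,2) \<open>t \<le> p\<close>] deg[OF that(1,2) \<open>t \<le> p\<close>]
      using that by (simp add: algebra_simps)
  qed
  define a where "a j = x (V j p)" for j
  define b where "b j = x (V j 1)" for j
  have ko: "odd k" by (rule oddk)
  have ma: "x (V q t) = a q" if "q < m" "s < t" "t \<le> p" for q t
  proof -
    have "(lam - 1) * x (V q t) ^ k = (lam - 1) * a q ^ k"
      using mid[OF that] mid[OF that(1) p2(1) order_refl] unfolding a_def by simp
    hence "x (V q t) ^ k = a q ^ k" using l1 by simp
    thus ?thesis using odd_pow_inj[OF ko] by blast
  qed
  have mb: "x (V q t) = b q" if "q < m" "1 \<le> t" "t \<le> s" for q t
  proof -
    have "(lam - 2) * x (V q t) ^ k = (lam - 2) * b q ^ k"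
      using blk[OF that] blk[OF that(1) order_refl s1] unfolding b_def by simp
    hence "x (V q t) ^ k = b q ^ k" using l2 by simp
    thus ?thesis using odd_pow_inj[OF ko] by blast
  qed
  have PP: "P j = b j ^ s * a j ^ (p - s) * b ((j+1) mod m) ^ s" if j: "j < m" for j
  proof -
    have jm: "(j+1) mod m < m" using m3 by simp
    have disj: "V j ` {1..p} \<inter> V ((j+1) mod m) ` {1..s} = {}"
      using V_inj[OF j jm] succ_ne[OF j] p2 by fastforce
    have injA: "inj_on (V j) {1..p}" by (rule inj_onI) (use V_inj[OF j j] in auto)
    have injB: "inj_on (V ((j+1) mod m)) {1..s}" by (rule inj_onI) (use V_inj[OF jm jm] p2 in auto)
    have "P j = prod x (V j ` {1..p}) * prod x (V ((j+1) mod m) ` {1..s})"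
      unfolding P_def edge_eq by (rule prod.union_disjoint) (use disj in auto)
    also have "prod x (V j ` {1..p}) = prod (\<lambda>t. x (V j t)) {1..p}"
      using prod.reindex[OF injA] by (simp add: comp_def)
    also have "{1..p} = {1..s} \<union> {Suc s..p}" using p2 by auto
    also have "prod (\<lambda>t. x (V j t)) ({1..s} \<union> {Suc s..p}) = prod (\<lambda>t. x (V j t)) {1..s} * prod (\<lambda>t. x (V j t)) {Suc s..p}"
      by (rule prod.union_disjoint) auto
    also have "prod (\<lambda>t. x (V j t)) {1..s} = b j ^ s"
      using prod.cong[OF refl, of "{1..s}" "\<lambda>t. x (V j t)" "\<lambda>t. b j"] mb[OF j] by simp
    also have "prod (\<lambda>t. x (V j t)) {Suc s..p} = a j ^ (p - s)"
      using prod.cong[OF refl, of "{Suc s..p}" "\<lambda>t. x (V j t)" "\<lambda>t. a j"] ma[OF j] by simp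
    also have "prod x (V ((j+1) mod m) ` {1..s}) = prod (\<lambda>t. x (V ((j+1) mod m) t)) {1..s}"
      using prod.reindex[OF injB] by (simp add: comp_def)
    also have "\<dots> = b ((j+1) mod m) ^ s"
      using prod.cong[OF refl, of "{1..s}" "\<lambda>t. x (V ((j+1) mod m) t)" "\<lambda>t. b ((j+1) mod m)"] mb[OF jm] by simp
    finally show ?thesis .
  qed
  have kt: "k = (p - s) + 2 * s" using kdef p2 by simp
  have tod: "odd (p - s)" using ko kt by simp
  have AA: "(lam - 1) * a j ^ k = - P j" if "j < m" for j
    using mid[OF that p2(1) order_refl] unfolding a_def .
  have BB: "(lam - 2) * b j ^ k = - (P j + P ((j+m-1) mod m))" if "j < m" for j
    using blk[OF that order_refl s1] unfolding b_def .
  have z: "a j = 0 \<and> b j = 0" if "j < m" for j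
    by (rule abstr[OF kt tod PP AA BB l1 l2 l3 that])
  obtain i where i: "i < n" "x i \<noteq> 0" using nz by blast
  then obtain q t where qt: "q < m" "1 \<le> t" "t \<le> p" "i = V q t" using V_surj by blast
  show False
  proof (cases "t \<le> s")
    case True thus False using mb[OF qt(1,2) True] z[OF qt(1)] i qt by simp
  next
    case False thus False using ma[OF qt(1) _ qt(3)] z[OF qt(1)] i qt by simp
  qed
qed

end

theorem proposition7p1:
  fixes k s m :: nat
  assumes "odd k" and "1 \<le> s" and "2 * s < k"
    and "scyc_n k s m \<ge> 2 * k - s"
  shows "scyc_maxdeg k s m = 2
         \<and> scyc_lap_H_eig k s m 2
         \<and> (\<forall>lam. scyc_lap_H_eig k s m lam \<longrightarrow> lam \<le> 2)
         \<and> (even s \<longrightarrow> {lam. scyc_lap_H_eig k s m lam \<and> lam > 1} = {2})"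
proof -
  have m3: "3 \<le> m"
  proof (rule ccontr)
    assume "\<not> 3 \<le> m" hence "m \<le> 2" by simp
    hence "m * (k - s) \<le> 2 * (k - s)" by simp
    thus False using assms(2,3,4) unfolding scyc_n_def by linarith
  qed
  interpret S: scyc k s m "k - s" "m * (k - s)"
    by unfold_locales (use assms m3 in auto)
  have p3: "\<forall>lam. scyc_lap_H_eig k s m lam \<longrightarrow> lam \<le> 2"
  proof (intro allI impI)
    fix lam assume e: "scyc_lap_H_eig k s m lam"
    show "lam \<le> 2"
    proof (rule ccontr)
      assume "\<not> lam \<le> 2"
      thus False using S.noeig[OF e] by simp
    qed
  qed
  have p4: "even s \<longrightarrow> {lam. scyc_lap_H_eig k s m lam \<and> lam > 1} = {2}"
  proof
    assume es: "even s"
    show "{lam. scyc_lap_H_eig k s m lam \<and> lam > 1} = {2}"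
    proof
      show "{lam. scyc_lap_H_eig k s m lam \<and> lam > 1} \<subseteq> {2}"
      proof
        fix lam assume "lam \<in> {lam. scyc_lap_H_eig k s m lam \<and> lam > 1}"
        hence e: "scyc_lap_H_eig k s m lam" "lam > 1" by auto
        show "lam \<in> {2}"
        proof (rule ccontr)
          assume "lam \<notin> {2}"
          thus False using S.noeig[OF e(1) e(2)] es by simp
        qed
      qed
      show "{2} \<subseteq> {lam. scyc_lap_H_eig k s m lam \<and> lam > 1}" using S.eig2 by simp
    qed
  qed
  show ?thesis using S.maxdeg S.eig2 p3 p4 by blast
qed

end
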